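(* Consider a Utility Maximization problem in the MPOI world with ground set $J$, downward-closed constraints $\mathcal{F}\subseteq 2^J$, semiadditive objective $f(I,x)=\sum_{i\in I}x_i+h(I)$, and Markov systems $(S_i)_{i\in J}$ with non-negative destination values. Let $\mathrm{OPT}$ be the utility of an optimal strategy. Then $$\mathrm{OPT}\le \mathbb{E}_{\sigma}\Big[\max_{I\in\mathcal{F}} f\big(I,Y(\sigma)\big)\Big],$$ where $\sigma=(\sigma_i)_{i\in J}$ is a random trajectory profile in which each $S_i$ is run independently from $s_i$ until it reaches a destination state, and $Y(\sigma)=(Y(\sigma_i))_{i\in J}$ is the vector of prevailing costs.
   Context: A Markov system $S=(V,P,s,T,\pi,r)$ consists of a Markov chain on a finite state space $V$ with transition matrix $P=(p_{u,v})$, a starting state $s$, a set $T\subseteq V$ of absorbing destination states, prices $\pi^u\ge0$ for $u\in V\setminus T$, and values $r^t\in\mathbb{R}$ for $t\in T$; every state reaches some destination state. MPOI game / Utility Maximization: each $S_i$ starts at $s_i$; at each step the player either advances some $S_i$ from its current non-destination state $u$, paying $\pi_i^u$ (the state then moves randomly according to $P_i$), or ends the game by selecting a set $I\in\mathcal{F}$ of ready elements (elements whose Markov system is in a destination state). $\mathcal{F}$ is downward-closed and all values are non-negative. The utility of an adaptive strategy is $\mathbb{E}[f(I,(r_i^{\mathrm{dest}(\sigma_i)})_{i\in I})-\text{total price paid}]$, where $\mathrm{dest}(\sigma_i)$ is the destination state reached by $S_i$. Grade: for a Markov system $S$ and $\tau\in\mathbb{R}$, the $\tau$-penalized game from state $v$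 is: at each move the player may Halt (game ends) or Play; Play at a non-destination state $v$ pays $\pi^v$ and moves according to $P$; Play at a destination state $v$ gives the player $r^v-\tau$ and ends the game. Let $U^v(\tau)$ be the optimal expected (value minus price) starting from $v$. The grade of $v$ is $\tau^v=\sup\{\tau\in\mathbb{R}: U^v(\tau)>0\}$; $\tau_i^v$ denotes the grade of $v$ in $S_i$. Prevailing cost: for a trajectory $\sigma_i$ of $S_i$, $Y(\sigma_i)=\min_{v\in\sigma_i}\tau_i^v$. *)

theory Defs
  imports "HOL-Probability.Probability"
begin

(* A family of Markov systems (S_i), i in J, is given by
   V i  : state space,  P i : transition kernel (u \<mapsto> distribution of next state),
   s i  : start state,   T i : destination states,
   pr i : prices,        r i : values of destination states. *)

(* A (deterministic, adaptive) strategy for the tau-penalized game decides, given the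
   history of visited states (the last element is the current state), whether to Play (True)
   or Halt (False).  pen_val ... n h is the expected (value minus price) of the strategy when
   the game is additionally halted after at most n moves. *)
fun pen_val :: "('s \<Rightarrow> 's pmf) \<Rightarrow> 's set \<Rightarrow> ('s \<Rightarrow> real) \<Rightarrow> ('s \<Rightarrow> real) \<Rightarrow> real
      \<Rightarrow> ('s list \<Rightarrow> bool) \<Rightarrow> nat \<Rightarrow> 's list \<Rightarrow> real" where
  "pen_val P T pr r \<tau> \<sigma> 0 h = 0"
| "pen_val P T pr r \<tau> \<sigma> (Suc n) h =
     (if \<not> \<sigma> h then 0
      else if last h \<in> T then r (last h) - \<tau>
      else - pr (last h) + measure_pmf.expectation (P (last h)) (\<lambda>w. pen_val P T pr r \<tau> \<sigma> n (h @ [w])))"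

definition pen_opt :: "('s \<Rightarrow> 's pmf) \<Rightarrow> 's set \<Rightarrow> ('s \<Rightarrow> real) \<Rightarrow> ('s \<Rightarrow> real) \<Rightarrow> 's \<Rightarrow> real \<Rightarrow> real" where
  "pen_opt P T pr r v \<tau> = Sup {pen_val P T pr r \<tau> \<sigma> n [v] | \<sigma> n. True}"

definition grade :: "('s \<Rightarrow> 's pmf) \<Rightarrow> 's set \<Rightarrow> ('s \<Rightarrow> real) \<Rightarrow> ('s \<Rightarrow> real) \<Rightarrow> 's \<Rightarrow> real" where
  "grade P T pr r v = Sup {\<tau>. pen_opt P T pr r v \<tau> > 0}"

fun path_prob :: "('s \<Rightarrow> 's pmf) \<Rightarrow> 's set \<Rightarrow> 's list \<Rightarrow> real" where
  "path_prob P T [] = 0"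
| "path_prob P T [u] = (if u \<in> T then 1 else 0)"
| "path_prob P T (u # v # xs) = (if u \<in> T then 0 else pmf (P u) v * path_prob P T (v # xs))"

definition traj :: "('s \<Rightarrow> 's pmf) \<Rightarrow> 's set \<Rightarrow> 's \<Rightarrow> 's list pmf" where
  "traj P T s0 = embed_pmf (\<lambda>xs. if xs \<noteq> [] \<and> hd xs = s0 then path_prob P T xs else 0)"

definition prevailing_cost :: "('s \<Rightarrow> 's pmf) \<Rightarrow> 's set \<Rightarrow> ('s \<Rightarrow> real) \<Rightarrow> ('s \<Rightarrow> real) \<Rightarrow> 's list \<Rightarrow> real" where
  "prevailing_cost P T pr r xs = Min (grade P T pr r ` set xs)"

datatype 'j action = Advance 'j | Select "'j set"

(* A deterministic adaptive strategy maps the history of state profiles (last = current) to an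
   action.  mpoi_valid: the strategy only takes legal actions and ends the game within n
   advancing steps on every possible run. *)
fun mpoi_valid :: "'j set \<Rightarrow> 'j set set \<Rightarrow> ('j \<Rightarrow> 's \<Rightarrow> 's pmf) \<Rightarrow> ('j \<Rightarrow> 's set)
      \<Rightarrow> (('j \<Rightarrow> 's) list \<Rightarrow> 'j action) \<Rightarrow> nat \<Rightarrow> ('j \<Rightarrow> 's) list \<Rightarrow> bool" where
  "mpoi_valid J F P T \<sigma> 0 h =
     (case \<sigma> h of Select I \<Rightarrow> I \<in> F \<and> (\<forall>i\<in>I. last h i \<in> T i) | Advance i \<Rightarrow> False)"
| "mpoi_valid J F P T \<sigma> (Suc n) h =
     (case \<sigma> h of Select I \<Rightarrow> I \<in> F \<and> (\<forall>i\<in>I. last h i \<in> T i)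
      | Advance i \<Rightarrow> i \<in> J \<and> last h i \<notin> T i \<and>
          (\<forall>w\<in>set_pmf (P i (last h i)). mpoi_valid J F P T \<sigma> n (h @ [(last h)(i := w)])))"

(* expected utility  f(I, values) - total price  of the strategy (for valid strategies),
   with semiadditive objective f(I,x) = (sum_{i in I} x_i) + hf I *)
fun mpoi_util :: "('j set \<Rightarrow> real) \<Rightarrow> ('j \<Rightarrow> 's \<Rightarrow> 's pmf) \<Rightarrow> ('j \<Rightarrow> 's \<Rightarrow> real) \<Rightarrow> ('j \<Rightarrow> 's \<Rightarrow> real)
      \<Rightarrow> (('j \<Rightarrow> 's) list \<Rightarrow> 'j action) \<Rightarrow> nat \<Rightarrow> ('j \<Rightarrow> 's) list \<Rightarrow> real" where
  "mpoi_util hf P pr r \<sigma> 0 h =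
     (case \<sigma> h of Select I \<Rightarrow> (\<Sum>i\<in>I. r i (last h i)) + hf I | Advance i \<Rightarrow> 0)"
| "mpoi_util hf P pr r \<sigma> (Suc n) h =
     (case \<sigma> h of Select I \<Rightarrow> (\<Sum>i\<in>I. r i (last h i)) + hf I
      | Advance i \<Rightarrow> - pr i (last h i) + measure_pmf.expectation (P i (last h i))
            (\<lambda>w. mpoi_util hf P pr r \<sigma> n (h @ [(last h)(i := w)])))"

definition mpoi_opt :: "'j set \<Rightarrow> 'j set set \<Rightarrow> ('j set \<Rightarrow> real) \<Rightarrow> ('j \<Rightarrow> 's \<Rightarrow> 's pmf)
      \<Rightarrow> ('j \<Rightarrow> 's) \<Rightarrow> ('j \<Rightarrow> 's set) \<Rightarrow> ('j \<Rightarrow> 's \<Rightarrow> real) \<Rightarrow> ('j \<Rightarrow> 's \<Rightarrow> real) \<Rightarrow> real" where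
  "mpoi_opt J F hf P s T pr r =
     Sup {mpoi_util hf P pr r \<sigma> n [s] | \<sigma> n. mpoi_valid J F P T \<sigma> n [s]}"

definition markov_system :: "'s set \<Rightarrow> ('s \<Rightarrow> 's pmf) \<Rightarrow> 's \<Rightarrow> 's set \<Rightarrow> ('s \<Rightarrow> real) \<Rightarrow> ('s \<Rightarrow> real) \<Rightarrow> bool" where
  "markov_system V P s0 T pr r \<longleftrightarrow>
     finite V \<and> s0 \<in> V \<and> T \<subseteq> V \<and>
     (\<forall>u\<in>V. set_pmf (P u) \<subseteq> V) \<and>
     (\<forall>t\<in>T. P t = return_pmf t) \<and>
     (\<forall>u\<in>V - T. pr u \<ge> 0) \<and>
     (\<forall>u\<in>V. \<exists>t\<in>T. (u, t) \<in> {(a, b). b \<in> set_pmf (P a)}\<^sup>*)"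

end

theory Submission
  imports Defs
begin


lemma exp_mono_fin:
  fixes f g :: "'a \<Rightarrow> real"
  assumes "finite (set_pmf p)" "\<And>x. x \<in> set_pmf p \<Longrightarrow> f x \<le> g x"
  shows "measure_pmf.expectation p f \<le> measure_pmf.expectation p g"
  using assms by (intro integral_mono_AE) (auto simp: AE_measure_pmf_iff intro: integrable_measure_pmf_finite)

lemma exp_le_const_fin:
  fixes f :: "'a \<Rightarrow> real"
  assumes "finite (set_pmf p)" "\<And>x. x \<in> set_pmf p \<Longrightarrow> f x \<le> c"
  shows "measure_pmf.expectation p f \<le> c"
proof -
  have "measure_pmf.expectation p f \<le> measure_pmf.expectation p (\<lambda>_. c)"
    using assms by (intro exp_mono_fin) auto
  then show ?thesis by simp
qed

lemma exp_add_fin: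
  fixes f g :: "'a \<Rightarrow> real"
  assumes "finite (set_pmf p)"
  shows "measure_pmf.expectation p (\<lambda>x. f x + g x) = measure_pmf.expectation p f + measure_pmf.expectation p g"
  using assms by (intro Bochner_Integration.integral_add) (auto intro: integrable_measure_pmf_finite)

locale msys =
  fixes V :: "'s set" and P :: "'s \<Rightarrow> 's pmf" and T :: "'s set" and pr :: "'s \<Rightarrow> real" and r :: "'s \<Rightarrow> real"
  assumes finV: "finite V" and TV: "T \<subseteq> V" and closed: "\<And>u. u \<in> V \<Longrightarrow> set_pmf (P u) \<subseteq> V"
    and absorb: "\<And>t. t \<in> T \<Longrightarrow> P t = return_pmf t"
    and prnn: "\<And>u. u \<in> V - T \<Longrightarrow> pr u \<ge> 0"
    and reach: "\<And>u. u \<in> V \<Longrightarrow> \<exists>t\<in>T. (u, t) \<in> {(a, b). b \<in> set_pmf (P a)}\<^sup>*"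
begin

lemma fin_supp: "u \<in> V \<Longrightarrow> finite (set_pmf (P u))"
  using closed finV finite_subset by blast

definition Rm where "Rm = Max (r ` T)"

lemma r_le_Rm: "t \<in> T \<Longrightarrow> r t \<le> Rm"
  unfolding Rm_def using TV finV by (intro Max_ge) (auto intro: finite_subset)

lemma pen_val_bound:
  "last h \<in> V \<Longrightarrow> pen_val P T pr r \<tau> \<sigma> n h \<le> max 0 (Rm - \<tau>)"
proof (induction n arbitrary: h)
  case 0 then show ?case by simp
next
  case (Suc n)
  show ?case
  proof (cases "\<sigma> h \<and> last h \<notin> T")
    case True
    have "measure_pmf.expectation (P (last h)) (\<lambda>w. pen_val P T pr r \<tau> \<sigma> n (h @ [w])) \<le> max 0 (Rm - \<tau>)"
      using Suc.prems fin_supp closed by (intro exp_le_const_fin) (auto intro!: Suc.IH, blast)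
    moreover have "pr (last h) \<ge> 0" using prnn Suc.prems True by auto
    ultimately show ?thesis using True by simp
  next
    case False
    then show ?thesis using r_le_Rm[of "last h"] by (auto simp: max_def)
  qed
qed

lemma pen_val_lip:
  "last h \<in> V \<Longrightarrow> \<tau> \<le> \<tau>' \<Longrightarrow> pen_val P T pr r \<tau> \<sigma> n h \<le> pen_val P T pr r \<tau>' \<sigma> n h + (\<tau>' - \<tau>)"
proof (induction n arbitrary: h)
  case 0 then show ?case by simp
next
  case (Suc n)
  show ?case
  proof (cases "\<sigma> h \<and> last h \<notin> T")
    case True
    have "measure_pmf.expectation (P (last h)) (\<lambda>w. pen_val P T pr r \<tau> \<sigma> n (h @ [w])) \<le>
          measure_pmf.expectation (P (last h)) (\<lambda>w. pen_val P T pr r \<tau>' \<sigma> n (h @ [w]) + (\<tau>' - \<tau>))"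
      using Suc.prems fin_supp closed by (intro exp_mono_fin) (auto intro!: Suc.IH, blast)
    also have "\<dots> = measure_pmf.expectation (P (last h)) (\<lambda>w. pen_val P T pr r \<tau>' \<sigma> n (h @ [w])) + (\<tau>' - \<tau>)"
      using fin_supp Suc.prems by (subst exp_add_fin) auto
    finally show ?thesis using True by simp
  next
    case False
    then show ?thesis using Suc.prems by auto
  qed
qed

definition U where "U v \<tau> = pen_opt P T pr r v \<tau>"

lemma pen_set_bdd: "v \<in> V \<Longrightarrow> bdd_above {pen_val P T pr r \<tau> \<sigma> n [v] | \<sigma> n. True}"
  using pen_val_bound[of "[v]"] by (auto intro!: bdd_aboveI[where M="max 0 (Rm - \<tau>)"])

lemma pen_val_le_U: "v \<in> V \<Longrightarrow> pen_val P T pr r \<tau> \<sigma> n [v] \<le> U v \<tau>"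
  unfolding U_def pen_opt_def by (rule cSup_upper[OF _ pen_set_bdd]) auto

lemma U_le: "(\<And>\<sigma> n. pen_val P T pr r \<tau> \<sigma> n [v] \<le> c) \<Longrightarrow> U v \<tau> \<le> c"
  unfolding U_def pen_opt_def by (rule cSup_least) auto

lemma U_nonneg: "v \<in> V \<Longrightarrow> U v \<tau> \<ge> 0"
  using pen_val_le_U[of v \<tau> "\<lambda>_. False" 1] by simp

lemma U_T: "t \<in> T \<Longrightarrow> U t \<tau> \<ge> r t - \<tau>"
  using pen_val_le_U[of t \<tau> "\<lambda>_. True" 1] TV by auto

lemma U_lip: "v \<in> V \<Longrightarrow> \<tau> \<le> \<tau>' \<Longrightarrow> U v \<tau> \<le> U v \<tau>' + (\<tau>' - \<tau>)"
proof (rule U_le)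
  fix \<sigma> n assume a: "v \<in> V" "\<tau> \<le> \<tau>'"
  show "pen_val P T pr r \<tau> \<sigma> n [v] \<le> U v \<tau>' + (\<tau>' - \<tau>)"
    using pen_val_lip[of "[v]" \<tau> \<tau>' \<sigma> n] pen_val_le_U[of v \<tau>' \<sigma> n] a by simp
qed

lemma U_big: "v \<in> V \<Longrightarrow> \<tau> \<ge> Rm \<Longrightarrow> U v \<tau> \<le> 0"
proof (rule U_le)
  fix \<sigma> n assume a: "v \<in> V" "\<tau> \<ge> Rm"
  show "pen_val P T pr r \<tau> \<sigma> n [v] \<le> 0"
    using pen_val_bound[of "[v]" \<tau> \<sigma> n] a by simp
qed

definition g where "g v = grade P T pr r v"

lemma U_above_grade: assumes "v \<in> V" "\<tau> > g v" shows "U v \<tau> \<le> 0"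
proof (rule ccontr)
  assume "\<not> U v \<tau> \<le> 0"
  then have "\<tau> \<in> {\<tau>. pen_opt P T pr r v \<tau> > 0}" by (simp add: U_def)
  moreover have "bdd_above {\<tau>. pen_opt P T pr r v \<tau> > 0}"
    using U_big[OF assms(1)] by (intro bdd_aboveI[where M=Rm]) (metis U_def linorder_not_le mem_Collect_eq order_less_imp_le)
  ultimately have "\<tau> \<le> g v" unfolding g_def grade_def by (rule cSup_upper)
  then show False using assms by simp
qed

lemma U_at_grade: assumes "v \<in> V" shows "U v (g v) \<le> 0"
proof (rule field_le_epsilon)
  fix e :: real assume "0 < e"
  have "U v (g v) \<le> U v (g v + e) + e" using U_lip[OF assms, of "g v" "g v + e"] \<open>0<e\<close> by simp
  also have "U v (g v + e) \<le> 0" using U_above_grade[OF assms] \<open>0<e\<close> by simp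
  finally show "U v (g v) \<le> 0 + e" by simp
qed

end


lemma pen_val_shift:
  "h \<noteq> [] \<Longrightarrow> (\<forall>ys. \<sigma> (x # h @ ys) = \<sigma>' (h @ ys)) \<Longrightarrow>
   pen_val P T pr r \<tau> \<sigma> n (x # h) = pen_val P T pr r \<tau> \<sigma>' n h"
proof (induction n arbitrary: h)
  case 0 then show ?case by simp
next
  case (Suc n)
  have s: "\<sigma> (x # h) = \<sigma>' h" using Suc.prems(2)[rule_format, of "[]"] by simp
  have "pen_val P T pr r \<tau> \<sigma> n (x # h @ [w]) = pen_val P T pr r \<tau> \<sigma>' n (h @ [w])" for w
    using Suc.prems by (intro Suc.IH) auto
  then show ?case using Suc.prems s by simp
qed

lemma pen_val_trunc:
  "length h + n = c \<Longrightarrow> n \<le> N \<Longrightarrow>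
   pen_val P T pr r \<tau> (\<lambda>h. \<sigma> h \<and> length h < c) N h = pen_val P T pr r \<tau> \<sigma> n h"
proof (induction n arbitrary: h N)
  case 0 then show ?case by (cases N) auto
next
  case (Suc n)
  then obtain N' where N: "N = Suc N'" "n \<le> N'" by (cases N) auto
  have "pen_val P T pr r \<tau> (\<lambda>h. \<sigma> h \<and> length h < c) N' (h @ [w]) = pen_val P T pr r \<tau> \<sigma> n (h @ [w])" for w
    using Suc.prems N by (intro Suc.IH) auto
  then show ?case using Suc.prems N by simp
qed

context msys begin

lemma U_bellman:
  assumes u: "u \<in> V" "u \<notin> T"
  shows "- pr u + measure_pmf.expectation (P u) (\<lambda>w. U w \<kappa>) \<le> U u \<kappa>"
proof (rule field_le_epsilon)
  fix e :: real assume e: "0 < e"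
  define W where "W = set_pmf (P u)"
  have finW: "finite W" and WV: "W \<subseteq> V" using fin_supp closed u by (auto simp: W_def)
  have "\<exists>\<sigma> n. U w \<kappa> - e < pen_val P T pr r \<kappa> \<sigma> n [w]" if "w \<in> W" for w
  proof -
    have "U w \<kappa> - e < Sup {pen_val P T pr r \<kappa> \<sigma> n [w] | \<sigma> n. True}"
      using e by (simp add: U_def pen_opt_def)
    then obtain x where "x \<in> {pen_val P T pr r \<kappa> \<sigma> n [w] | \<sigma> n. True}" "U w \<kappa> - e < x"
      by (rule less_cSupE) auto
    then show ?thesis by auto
  qed
  then obtain sg ng where sgn: "\<And>w. w \<in> W \<Longrightarrow> U w \<kappa> - e < pen_val P T pr r \<kappa> (sg w) (ng w) [w]"
    by metis
  define N where "N = Max (ng ` W)"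
  have ngN: "ng w \<le> N" if "w \<in> W" for w using finW that by (simp add: N_def)
  define \<sigma>c where "\<sigma>c h = (case h of x # w # rest \<Rightarrow> sg w (w # rest) \<and> length (w # rest) < 1 + ng w | _ \<Rightarrow> True)" for h
  have eq: "pen_val P T pr r \<kappa> \<sigma>c N [u, w] = pen_val P T pr r \<kappa> (sg w) (ng w) [w]" if "w \<in> W" for w
  proof -
    have "pen_val P T pr r \<kappa> \<sigma>c N (u # [w]) = pen_val P T pr r \<kappa> (\<lambda>h. sg w h \<and> length h < 1 + ng w) N [w]"
      by (rule pen_val_shift) (auto simp: \<sigma>c_def)
    also have "\<dots> = pen_val P T pr r \<kappa> (sg w) (ng w) [w]"
      using ngN[OF that] by (intro pen_val_trunc) auto
    finally show ?thesis by simp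
  qed
  have "measure_pmf.expectation (P u) (\<lambda>w. U w \<kappa>) - e = measure_pmf.expectation (P u) (\<lambda>w. U w \<kappa> - e)"
    by (simp add: Bochner_Integration.integral_diff integrable_measure_pmf_finite fin_supp u)
  also have "\<dots> \<le> measure_pmf.expectation (P u) (\<lambda>w. pen_val P T pr r \<kappa> \<sigma>c N [u, w])"
    using sgn eq fin_supp[OF u(1)] by (intro exp_mono_fin) (auto simp: W_def less_imp_le)
  finally have "- pr u + measure_pmf.expectation (P u) (\<lambda>w. U w \<kappa>) - e \<le> pen_val P T pr r \<kappa> \<sigma>c (Suc N) [u]"
    using u by (simp add: \<sigma>c_def)
  also have "\<dots> \<le> U u \<kappa>" using pen_val_le_U u by blast
  finally show "- pr u + measure_pmf.expectation (P u) (\<lambda>w. U w \<kappa>) \<le> U u \<kappa> + e" by simp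
qed

lemma U_step:
  assumes u: "u \<in> V" "u \<notin> T"
  shows "- pr u + measure_pmf.expectation (P u) (\<lambda>w. U w (min \<kappa> (g w))) \<le> U u \<kappa>"
proof -
  have "U w (min \<kappa> (g w)) \<le> U w \<kappa>" if "w \<in> set_pmf (P u)" for w
  proof -
    have wV: "w \<in> V" using closed u that by blast
    show ?thesis
    proof (cases "g w < \<kappa>")
      case True
      then show ?thesis using U_at_grade[OF wV] U_nonneg[OF wV, of \<kappa>] by (simp add: min_def)
    qed (simp add: min_def)
  qed
  then have "measure_pmf.expectation (P u) (\<lambda>w. U w (min \<kappa> (g w))) \<le> measure_pmf.expectation (P u) (\<lambda>w. U w \<kappa>)"
    using fin_supp[OF u(1)] by (intro exp_mono_fin) auto
  then show ?thesis using U_bellman[OF u, of \<kappa>] by simp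
qed

end


lemma int_cons:
  fixes f :: "'a list \<Rightarrow> ennreal"
  assumes "\<And>xs. (\<forall>ys. xs \<noteq> u # ys) \<Longrightarrow> f xs = 0"
  shows "(\<integral>\<^sup>+ xs. f xs \<partial>count_space UNIV) = (\<integral>\<^sup>+ ys. f (u # ys) \<partial>count_space UNIV)"
proof -
  have b: "bij_betw (Cons u) UNIV (range (Cons u))" by (auto simp: bij_betw_def inj_on_def)
  have "(\<integral>\<^sup>+ ys. f (u # ys) \<partial>count_space UNIV) = (\<integral>\<^sup>+ xs. f xs \<partial>count_space (range (Cons u)))"
    by (rule nn_integral_bij_count_space[OF b])
  also have "\<dots> = (\<integral>\<^sup>+ xs. f xs * indicator (range (Cons u)) xs \<partial>count_space UNIV)"
    by (rule nn_integral_count_space_indicator) simp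
  also have "\<dots> = (\<integral>\<^sup>+ xs. f xs \<partial>count_space UNIV)"
    using assms by (intro nn_integral_cong) (auto simp: indicator_def)
  finally show ?thesis by simp
qed

lemma path_prob_nonneg: "path_prob P T xs \<ge> 0"
  by (induction P T xs rule: path_prob.induct) auto

definition dens where "dens P T u xs = (if xs \<noteq> [] \<and> hd xs = u then path_prob P T xs else 0)"
definition densn where "densn P T n u xs = (if length xs \<le> Suc n then dens P T u xs else 0)"

lemma dens_nonneg: "dens P T u xs \<ge> 0"
  by (simp add: dens_def path_prob_nonneg)

lemma densn_nonneg: "densn P T n u xs \<ge> 0"
  by (simp add: densn_def dens_nonneg)

lemma dens_T: "u \<in> T \<Longrightarrow> dens P T u xs = (if xs = [u] then 1 else 0)"
  by (cases xs; cases "tl xs") (auto simp: dens_def)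

lemma densn_T: "u \<in> T \<Longrightarrow> densn P T n u xs = (if xs = [u] then 1 else 0)"
  by (auto simp: densn_def dens_T)

lemma dens_zero: "(\<forall>ys. xs \<noteq> u # ys) \<Longrightarrow> dens P T u xs = 0"
  by (cases xs) (auto simp: dens_def)

lemma densn_zero: "(\<forall>ys. xs \<noteq> u # ys) \<Longrightarrow> densn P T n u xs = 0"
  by (simp add: densn_def dens_zero)

lemma dens_cons:
  assumes "u \<notin> T" "finite W" "set_pmf (P u) \<subseteq> W"
  shows "dens P T u (u # ys) = (\<Sum>w\<in>W. pmf (P u) w * dens P T w ys)"
proof (cases ys)
  case Nil then show ?thesis using assms by (simp add: dens_def)
next
  case (Cons b zs)
  have "(\<Sum>w\<in>W. pmf (P u) w * dens P T w ys) = (\<Sum>w\<in>W. if w = b then pmf (P u) b * path_prob P T ys else 0)"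
    by (intro sum.cong) (auto simp: dens_def Cons)
  also have "\<dots> = (if b \<in> W then pmf (P u) b * path_prob P T ys else 0)"
    using assms by (simp add: sum.delta)
  also have "\<dots> = pmf (P u) b * path_prob P T ys"
    using assms by (auto simp: set_pmf_eq)
  finally show ?thesis using assms by (simp add: dens_def Cons)
qed

lemma densn_cons:
  assumes "u \<notin> T" "finite W" "set_pmf (P u) \<subseteq> W"
  shows "densn P T (Suc n) u (u # ys) = (\<Sum>w\<in>W. pmf (P u) w * densn P T n w ys)"
  using dens_cons[where P=P and u=u and T=T, OF assms, of ys] by (simp add: densn_def)

lemma densn_0: "u \<notin> T \<Longrightarrow> densn P T 0 u xs = 0"
  by (cases xs; cases "tl xs") (auto simp: densn_def dens_def)

definition Sn where "Sn P T n u = (\<integral>\<^sup>+ xs. ennreal (densn P T n u xs) \<partial>count_space UNIV)"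
definition S where "S P T u = (\<integral>\<^sup>+ xs. ennreal (dens P T u xs) \<partial>count_space UNIV)"

lemma int_single: "(\<integral>\<^sup>+ xs. ennreal (if xs = a then 1 else 0) \<partial>count_space UNIV) = 1"
proof -
  have "(\<integral>\<^sup>+ xs. ennreal (if xs = a then 1 else 0) \<partial>count_space UNIV) = (\<integral>\<^sup>+ xs. indicator {a} xs \<partial>count_space UNIV)"
    by (intro nn_integral_cong) (auto simp: indicator_def)
  then show ?thesis by simp
qed

lemma S_T: "u \<in> T \<Longrightarrow> S P T u = 1"
  unfolding S_def dens_T by (rule int_single)

lemma Sn_T: "u \<in> T \<Longrightarrow> Sn P T n u = 1"
  unfolding Sn_def densn_T by (rule int_single)

lemma S_cons:
  assumes "u \<notin> T" "finite W" "set_pmf (P u) \<subseteq> W"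
  shows "S P T u = (\<Sum>w\<in>W. ennreal (pmf (P u) w) * S P T w)"
proof -
  have "S P T u = (\<integral>\<^sup>+ ys. ennreal (dens P T u (u # ys)) \<partial>count_space UNIV)"
    unfolding S_def by (rule int_cons) (simp add: dens_zero)
  also have "\<dots> = (\<integral>\<^sup>+ ys. (\<Sum>w\<in>W. ennreal (pmf (P u) w) * ennreal (dens P T w ys)) \<partial>count_space UNIV)"
    using assms by (intro nn_integral_cong)
       (simp add: dens_cons[where P=P and u=u and T=T, OF assms] ennreal_mult dens_nonneg sum_ennreal[symmetric] del: sum_ennreal)
  also have "\<dots> = (\<Sum>w\<in>W. ennreal (pmf (P u) w) * S P T w)"
    by (simp add: nn_integral_sum nn_integral_cmult S_def)
  finally show ?thesis .
qed

lemma Sn_cons: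
  assumes "u \<notin> T" "finite W" "set_pmf (P u) \<subseteq> W"
  shows "Sn P T (Suc n) u = (\<Sum>w\<in>W. ennreal (pmf (P u) w) * Sn P T n w)"
proof -
  have "Sn P T (Suc n) u = (\<integral>\<^sup>+ ys. ennreal (densn P T (Suc n) u (u # ys)) \<partial>count_space UNIV)"
    unfolding Sn_def by (rule int_cons) (simp add: densn_zero)
  also have "\<dots> = (\<integral>\<^sup>+ ys. (\<Sum>w\<in>W. ennreal (pmf (P u) w) * ennreal (densn P T n w ys)) \<partial>count_space UNIV)"
    using assms by (intro nn_integral_cong)
       (simp add: densn_cons[where P=P and u=u and T=T, OF assms] ennreal_mult densn_nonneg sum_ennreal[symmetric] del: sum_ennreal)
  also have "\<dots> = (\<Sum>w\<in>W. ennreal (pmf (P u) w) * Sn P T n w)"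
    by (simp add: nn_integral_sum nn_integral_cmult Sn_def)
  finally show ?thesis .
qed

lemma Sn_0: "u \<notin> T \<Longrightarrow> Sn P T 0 u = 0"
  by (simp add: Sn_def densn_0)

lemma S_SUP: "S P T u = (SUP n. Sn P T n u)"
proof -
  have inc: "incseq (\<lambda>n xs. ennreal (densn P T n u xs))"
    by (auto simp: incseq_def le_fun_def densn_def dens_nonneg)
  have "(\<lambda>xs. (SUP n. ennreal (densn P T n u xs))) = (\<lambda>xs. ennreal (dens P T u xs))"
  proof
    fix xs
    show "(SUP n. ennreal (densn P T n u xs)) = ennreal (dens P T u xs)"
    proof (rule antisym)
      show "(SUP n. ennreal (densn P T n u xs)) \<le> ennreal (dens P T u xs)"
        by (intro SUP_least) (auto simp: densn_def dens_nonneg)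
      have "ennreal (dens P T u xs) = ennreal (densn P T (length xs) u xs)" by (simp add: densn_def)
      also have "\<dots> \<le> (SUP n. ennreal (densn P T n u xs))" by (rule SUP_upper) simp
      finally show "ennreal (dens P T u xs) \<le> (SUP n. ennreal (densn P T n u xs))" .
    qed
  qed
  then show ?thesis
    using nn_integral_monotone_convergence_SUP[OF inc, of "count_space UNIV"]
    by (simp add: S_def Sn_def)
qed



lemma ennreal_sum_mult:
  assumes a: "\<And>w. (s::'a\<Rightarrow>real) w \<ge> 0"
  shows "(\<Sum>w\<in>A. ennreal (pmf p w) * ennreal (s w)) = ennreal (\<Sum>w\<in>A. pmf p w * s w)"
proof -
  have "ennreal (\<Sum>w\<in>A. pmf p w * s w) = (\<Sum>w\<in>A. ennreal (pmf p w * s w))"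
    using a by (intro sum_ennreal[symmetric]) auto
  also have "\<dots> = (\<Sum>w\<in>A. ennreal (pmf p w) * ennreal (s w))"
    using a by (intro sum.cong refl ennreal_mult) auto
  finally show ?thesis by simp
qed

context msys begin

lemma Sn_le1: "u \<in> V \<Longrightarrow> Sn P T n u \<le> 1"
proof (induction n arbitrary: u)
  case 0 then show ?case by (cases "u \<in> T") (auto simp: Sn_T Sn_0)
next
  case (Suc n)
  show ?case
  proof (cases "u \<in> T")
    case True then show ?thesis by (simp add: Sn_T)
  next
    case False
    have "Sn P T (Suc n) u = (\<Sum>w\<in>set_pmf (P u). ennreal (pmf (P u) w) * Sn P T n w)"
      using False fin_supp Suc.prems by (intro Sn_cons) auto
    also have "\<dots> \<le> (\<Sum>w\<in>set_pmf (P u). ennreal (pmf (P u) w) * 1)"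
      using Suc.IH closed Suc.prems by (intro sum_mono mult_left_mono) auto
    also have "\<dots> = ennreal (\<Sum>w\<in>set_pmf (P u). pmf (P u) w)" by simp
    also have "\<dots> = 1" using fin_supp Suc.prems by (subst sum_pmf_eq_1) auto
    finally show ?thesis .
  qed
qed

lemma S_le1: "u \<in> V \<Longrightarrow> S P T u \<le> 1"
  unfolding S_SUP by (intro SUP_least Sn_le1)

definition sr where "sr u = enn2real (S P T u)"

lemma S_sr: "u \<in> V \<Longrightarrow> S P T u = ennreal (sr u)"
  using S_le1[of u] by (simp add: sr_def ennreal_enn2real_if top_unique)
    (metis ennreal_enn2real ennreal_one_less_top order_le_less_trans order_less_irrefl)

lemma sr_nonneg: "sr u \<ge> 0" by (simp add: sr_def)

lemma sr_T: "t \<in> T \<Longrightarrow> sr t = 1" by (simp add: sr_def S_T)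

lemma sr_cons: assumes "u \<in> V" "u \<notin> T"
  shows "sr u = (\<Sum>w\<in>set_pmf (P u). pmf (P u) w * sr w)"
proof -
  have "ennreal (sr u) = (\<Sum>w\<in>set_pmf (P u). ennreal (pmf (P u) w) * ennreal (sr w))"
    using S_cons[where P=P and u=u and T=T, OF assms(2) fin_supp[OF assms(1)] order_refl] assms closed
    by (simp add: S_sr subset_iff cong: sum.cong)
  also have "\<dots> = ennreal (\<Sum>w\<in>set_pmf (P u). pmf (P u) w * sr w)"
    by (rule ennreal_sum_mult[OF sr_nonneg])
  finally show ?thesis using sr_nonneg by (simp add: sum_nonneg)
qed

lemma sr_one: assumes "u \<in> V" shows "sr u = 1"
proof -
  have le: "sr v \<le> 1" if "v \<in> V" for v
    using S_le1[OF that] S_sr[OF that] by simp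
  define m where "m = Min (sr ` V)"
  have Vne: "V \<noteq> {}" using assms by auto
  have m_le: "m \<le> sr v" if "v \<in> V" for v using finV that by (simp add: m_def)
  have "m \<in> sr ` V" unfolding m_def using finV Vne by (intro Min_in) auto
  then obtain u0 where u0: "u0 \<in> V" "sr u0 = m" by auto
  have "m \<ge> 1"
  proof (rule ccontr)
    assume m1: "\<not> m \<ge> 1"
    define A where "A = {v \<in> V. sr v = m}"
    have closedA: "w \<in> A" if "v \<in> A" "w \<in> set_pmf (P v)" for v w
    proof -
      have vV: "v \<in> V" and vm: "sr v = m" using that by (auto simp: A_def)
      have vT: "v \<notin> T" using vm m1 sr_T by auto
      have wV: "w \<in> V" using closed vV that by blast
      have "(\<Sum>x\<in>set_pmf (P v). pmf (P v) x * (sr x - m)) = (\<Sum>x\<in>set_pmf (P v). pmf (P v) x * sr x - m * pmf (P v) x)"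
        by (intro sum.cong) (auto simp: algebra_simps)
      also have "\<dots> = (\<Sum>x\<in>set_pmf (P v). pmf (P v) x * sr x) - m * (\<Sum>x\<in>set_pmf (P v). pmf (P v) x)"
        by (simp only: sum_subtractf sum_distrib_left)
      also have "\<dots> = 0" using sr_cons[OF vV vT] vm sum_pmf_eq_1[OF fin_supp[OF vV] order_refl] by simp
      finally have sum0: "(\<Sum>x\<in>set_pmf (P v). pmf (P v) x * (sr x - m)) = 0" .
      have nonneg: "\<And>x. x \<in> set_pmf (P v) \<Longrightarrow> pmf (P v) x * (sr x - m) \<ge> 0"
      proof -
        fix x assume "x \<in> set_pmf (P v)"
        then have "x \<in> V" using closed[OF vV] by blast
        then show "0 \<le> pmf (P v) x * (sr x - m)" using m_le[of x] by simp
      qed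
      have "\<forall>x\<in>set_pmf (P v). pmf (P v) x * (sr x - m) = 0"
        using sum_nonneg_eq_0_iff[OF fin_supp[OF vV], of "\<lambda>x. pmf (P v) x * (sr x - m)"] nonneg sum0 by simp
      then have "pmf (P v) w * (sr w - m) = 0" using that(2) by simp
      moreover have "pmf (P v) w \<noteq> 0" using that(2) by (simp add: set_pmf_iff)
      ultimately have "sr w = m" by simp
      then show ?thesis using wV by (simp add: A_def)
    qed
    obtain t where t: "t \<in> T" "(u0, t) \<in> {(a, b). b \<in> set_pmf (P a)}\<^sup>*" using reach[OF u0(1)] by blast
    have "t \<in> A" using t(2)
    proof (induction rule: rtrancl_induct)
      case base then show ?case using u0 by (simp add: A_def)
    next
      case (step y z) then show ?case using closedA[of y z] by simp
    qed
    then show False using t(1) sr_T m1 by (auto simp: A_def)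
  qed
  then show ?thesis using m_le[OF assms] le[OF assms] by simp
qed

lemma S_one: "u \<in> V \<Longrightarrow> S P T u = 1"
  using S_sr sr_one by simp

lemma pmf_traj: "u \<in> V \<Longrightarrow> pmf (traj P T u) xs = dens P T u xs"
proof -
  assume u: "u \<in> V"
  have eq: "traj P T u = embed_pmf (dens P T u)" by (simp add: traj_def dens_def[abs_def])
  show ?thesis unfolding eq
    by (rule pmf_embed_pmf) (auto simp: dens_nonneg S_one[OF u, unfolded S_def])
qed

lemma traj_T: assumes "t \<in> T" shows "traj P T t = return_pmf [t]"
proof (rule pmf_eqI)
  fix xs show "pmf (traj P T t) xs = pmf (return_pmf [t]) xs"
    using assms TV pmf_traj[of t xs] by (auto simp: dens_T indicator_def)
qed

lemma set_traj: "u \<in> V \<Longrightarrow> xs \<in> set_pmf (traj P T u) \<Longrightarrow> xs \<noteq> [] \<and> hd xs = u"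
  by (auto simp: set_pmf_iff pmf_traj dens_def split: if_splits)

lemma traj_cons: assumes u: "u \<in> V" "u \<notin> T"
  shows "traj P T u = bind_pmf (P u) (\<lambda>w. map_pmf (Cons u) (traj P T w))"
proof (rule pmf_eqI)
  fix xs
  have inj: "inj (Cons u)" by (auto simp: inj_def)
  show "pmf (traj P T u) xs = pmf (bind_pmf (P u) (\<lambda>w. map_pmf (Cons u) (traj P T w))) xs"
  proof (cases "\<exists>ys. xs = u # ys")
    case False
    then have "pmf (map_pmf (Cons u) (traj P T w)) xs = 0" for w
      by (intro pmf_map_outside) auto
    then show ?thesis using False u by (simp add: pmf_bind pmf_traj dens_zero)
  next
    case True
    then obtain ys where xs: "xs = u # ys" by auto
    have "pmf (bind_pmf (P u) (\<lambda>w. map_pmf (Cons u) (traj P T w))) xs =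
          measure_pmf.expectation (P u) (\<lambda>w. pmf (traj P T w) ys)"
      by (simp add: pmf_bind xs pmf_map_inj'[OF inj])
    also have "\<dots> = (\<Sum>w\<in>set_pmf (P u). pmf (traj P T w) ys * pmf (P u) w)"
      using fin_supp[OF u(1)] by (intro integral_measure_pmf_real) auto
    also have "\<dots> = (\<Sum>w\<in>set_pmf (P u). pmf (P u) w * dens P T w ys)"
    proof (intro sum.cong refl)
      fix w assume "w \<in> set_pmf (P u)"
      then have "w \<in> V" using closed u by blast
      then show "pmf (traj P T w) ys * pmf (P u) w = pmf (P u) w * dens P T w ys" by (simp add: pmf_traj)
    qed
    also have "\<dots> = dens P T u xs"
      using dens_cons[where P=P and u=u and T=T, OF u(2) fin_supp[OF u(1)] order_refl] xs by simp
    finally show ?thesis using u by (simp add: pmf_traj)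
  qed
qed

lemma path_prob_V: "path_prob P T xs \<noteq> 0 \<Longrightarrow> xs \<noteq> [] \<Longrightarrow> hd xs \<in> V \<Longrightarrow> set xs \<subseteq> V"
proof (induction xs)
  case Nil then show ?case by simp
next
  case (Cons a xs)
  note IH = Cons.IH and prems = Cons.prems
  show ?case
  proof (cases xs)
    case Nil then show ?thesis using prems by simp
  next
    case (Cons b ys)
    have "pmf (P a) b \<noteq> 0" "path_prob P T xs \<noteq> 0" using prems Cons by (auto split: if_splits)
    then have "b \<in> set_pmf (P a)" by (simp add: set_pmf_iff)
    moreover have "a \<in> V" using prems by simp
    ultimately have "b \<in> V" using closed by blast
    then show ?thesis using IH prems Cons \<open>path_prob P T xs \<noteq> 0\<close> by auto
  qed
qed

lemma set_traj_V: "u \<in> V \<Longrightarrow> xs \<in> set_pmf (traj P T u) \<Longrightarrow> set xs \<subseteq> V"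
  using path_prob_V[of xs] by (auto simp: set_pmf_iff pmf_traj dens_def split: if_splits)

end


lemma exp_bind_bdd:
  fixes f :: "'b \<Rightarrow> real"
  assumes "\<And>x. \<bar>f x\<bar> \<le> B"
  shows "measure_pmf.expectation (bind_pmf M N) f = measure_pmf.expectation M (\<lambda>x. measure_pmf.expectation (N x) f)"
  unfolding measure_pmf_bind
  apply (rule integral_bind[where K="count_space UNIV" and B=B and B'=1])
  using assms apply (auto simp: measure_pmf.emeasure_space_1 space_subprob_algebra measure_pmf.subprob_space_axioms)
  done

lemma int_bdd:
  fixes f :: "'b \<Rightarrow> real"
  assumes "\<And>x. \<bar>f x\<bar> \<le> B"
  shows "integrable (measure_pmf p) f"
  using assms by (intro measure_pmf.integrable_const_bound[where B=B]) auto

lemma exp_abs_le: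
  fixes f :: "'b \<Rightarrow> real"
  assumes "\<And>x. \<bar>f x\<bar> \<le> B"
  shows "\<bar>measure_pmf.expectation p f\<bar> \<le> B"
proof -
  have i: "integrable (measure_pmf p) f" by (rule int_bdd[OF assms])
  have up: "measure_pmf.expectation p f \<le> measure_pmf.expectation p (\<lambda>_. B)"
    using assms abs_le_D1 by (intro integral_mono i) auto
  have lo: "\<And>x. - B \<le> f x" using assms abs_le_D2 by (metis minus_le_iff)
  moreover have "measure_pmf.expectation p (\<lambda>_. - B) \<le> measure_pmf.expectation p f"
    using lo by (intro integral_mono i) auto
  ultimately show ?thesis using up by (simp add: abs_le_iff)
qed

lemma Pi_bind_comp:
  assumes "finite J" "i \<in> J"
  shows "Pi_pmf J d p = bind_pmf (p i) (\<lambda>y. map_pmf (\<lambda>f. f(i := y)) (Pi_pmf (J - {i}) d p))"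
proof -
  have "J = insert i (J - {i})" using assms by auto
  then have "Pi_pmf J d p = Pi_pmf (insert i (J - {i})) d p" by simp
  also have "\<dots> = do {y \<leftarrow> p i; f \<leftarrow> Pi_pmf (J - {i}) d p; return_pmf (f(i := y))}"
    using assms by (intro Pi_pmf_insert') auto
  also have "\<dots> = bind_pmf (p i) (\<lambda>y. map_pmf (\<lambda>f. f(i := y)) (Pi_pmf (J - {i}) d p))"
    by (simp add: map_pmf_def)
  finally show ?thesis .
qed

lemma exp_Pi_split:
  fixes H :: "_ \<Rightarrow> real"
  assumes "finite J" "i \<in> J" "\<And>\<sigma>. \<bar>H \<sigma>\<bar> \<le> B"
  shows "measure_pmf.expectation (Pi_pmf J d p) H =
         measure_pmf.expectation (p i) (\<lambda>y. measure_pmf.expectation (Pi_pmf (J - {i}) d p) (\<lambda>f. H (f(i := y))))"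
  unfolding Pi_bind_comp[OF assms(1,2)]
  by (subst exp_bind_bdd[where B=B]) (use assms in auto)



locale mpoi_ctx =
  fixes J :: "'j set" and F :: "'j set set" and hf :: "'j set \<Rightarrow> real"
    and V :: "'j \<Rightarrow> 's set" and P :: "'j \<Rightarrow> 's \<Rightarrow> 's pmf" and s :: "'j \<Rightarrow> 's"
    and T :: "'j \<Rightarrow> 's set" and pr :: "'j \<Rightarrow> 's \<Rightarrow> real" and r :: "'j \<Rightarrow> 's \<Rightarrow> real"
  assumes finJ: "finite J"
    and FJ: "F \<subseteq> Pow J" and Fne: "F \<noteq> {}"
    and Fdown: "\<forall>A\<in>F. \<forall>B. B \<subseteq> A \<longrightarrow> B \<in> F"
    and msJ: "\<forall>i\<in>J. markov_system (V i) (P i) (s i) (T i) (pr i) (r i)"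
    and rnn: "\<forall>i\<in>J. \<forall>t\<in>T i. r i t \<ge> 0"
begin

lemma ms: "i \<in> J \<Longrightarrow> msys (V i) (P i) (T i) (pr i)"
  using msJ unfolding markov_system_def msys_def by blast

lemma sV: "i \<in> J \<Longrightarrow> s i \<in> V i"
  using msJ unfolding markov_system_def by blast

lemma finF: "finite F" using FJ finJ by (meson finite_Pow_iff finite_subset)

lemma empty_F: "{} \<in> F" using Fne Fdown by blast

definition gr where "gr i v = grade (P i) (T i) (pr i) (r i) v"
definition Uo where "Uo i v \<tau> = pen_opt (P i) (T i) (pr i) (r i) v \<tau>"
definition Yp where "Yp i xs = prevailing_cost (P i) (T i) (pr i) (r i) xs"
definition Lo where "Lo = Min (\<Union>j\<in>J. gr j ` V j)"
definition Hi where "Hi = Max (\<Union>j\<in>J. gr j ` V j)"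
definition cl where "cl x = max Lo (min Hi x)"
definition Mx where "Mx y = Max ((\<lambda>I. (\<Sum>i\<in>I. y i) + hf I) ` F)"
definition G where "G \<kappa> \<sigma> = Mx (\<lambda>j. cl (min (\<kappa> j) (Yp j (\<sigma> j))))"
definition A where "A u \<kappa> = measure_pmf.expectation (Pi_pmf J [] (\<lambda>j. traj (P j) (T j) (u j))) (G \<kappa>)"
definition W where "W u \<kappa> = A u \<kappa> + (\<Sum>j\<in>J. Uo j (u j) (\<kappa> j))"
definition Inv where "Inv u \<kappa> \<longleftrightarrow> (\<forall>j\<in>J. u j \<in> V j \<and> Lo \<le> \<kappa> j \<and> \<kappa> j \<le> gr j (u j))"

lemma finV: "j \<in> J \<Longrightarrow> finite (V j)" using msys.finV[OF ms] .

lemma fin_grs: "finite (\<Union>j\<in>J. gr j ` V j)" using finJ finV by auto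

lemma Lo_le: "j \<in> J \<Longrightarrow> v \<in> V j \<Longrightarrow> Lo \<le> gr j v"
  unfolding Lo_def using fin_grs by (intro Min_le) auto

lemma le_Hi: "j \<in> J \<Longrightarrow> v \<in> V j \<Longrightarrow> gr j v \<le> Hi"
  unfolding Hi_def using fin_grs by (intro Max_ge) auto

lemma cl_id: "Lo \<le> x \<Longrightarrow> x \<le> Hi \<Longrightarrow> cl x = x"
  by (simp add: cl_def)

lemma cl_bound: "\<bar>cl x\<bar> \<le> \<bar>Lo\<bar> + \<bar>Hi\<bar>"
  by (simp add: cl_def)

lemma Mx_ge: "I \<in> F \<Longrightarrow> (\<Sum>i\<in>I. y i) + hf I \<le> Mx y"
  unfolding Mx_def using finF by (intro Max_ge) auto

lemma Mx_bound:
  assumes "\<And>j. j \<in> J \<Longrightarrow> \<bar>y j\<bar> \<le> C"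
  shows "\<bar>Mx y\<bar> \<le> real (card J) * C + (\<Sum>I\<in>F. \<bar>hf I\<bar>)"
proof -
  have "Mx y \<in> (\<lambda>I. (\<Sum>i\<in>I. y i) + hf I) ` F" unfolding Mx_def using finF Fne by (intro Max_in) auto
  then obtain I where I: "I \<in> F" "Mx y = (\<Sum>i\<in>I. y i) + hf I" by auto
  have IJ: "I \<subseteq> J" using I FJ by auto
  have "\<bar>Mx y\<bar> \<le> (\<Sum>i\<in>I. \<bar>y i\<bar>) + \<bar>hf I\<bar>" using I by (simp add: sum_abs order_trans[OF abs_triangle_ineq] add_mono)
  also have "(\<Sum>i\<in>I. \<bar>y i\<bar>) \<le> (\<Sum>i\<in>J. \<bar>y i\<bar>)" using IJ finJ by (intro sum_mono2) auto
  also have "\<dots> \<le> (\<Sum>i\<in>J. C)" using assms by (intro sum_mono) auto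
  also have "\<bar>hf I\<bar> \<le> (\<Sum>I\<in>F. \<bar>hf I\<bar>)" using I finF by (intro member_le_sum) auto
  finally show ?thesis by simp
qed

lemma Mx_cong: "(\<And>j. j \<in> J \<Longrightarrow> y j = y' j) \<Longrightarrow> Mx y = Mx y'"
  unfolding Mx_def
proof -
  assume a: "\<And>j. j \<in> J \<Longrightarrow> y j = y' j"
  have "(\<lambda>I. (\<Sum>i\<in>I. y i) + hf I) ` F = (\<lambda>I. (\<Sum>i\<in>I. y' i) + hf I) ` F"
    using FJ a by (intro image_cong refl) (auto intro!: sum.cong)
  then show "Max ((\<lambda>I. (\<Sum>i\<in>I. y i) + hf I) ` F) = Max ((\<lambda>I. (\<Sum>i\<in>I. y' i) + hf I) ` F)" by simp
qed

definition BG where "BG = real (card J) * (\<bar>Lo\<bar> + \<bar>Hi\<bar>) + (\<Sum>I\<in>F. \<bar>hf I\<bar>)"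

lemma G_bound: "\<bar>G \<kappa> \<sigma>\<bar> \<le> BG"
  unfolding G_def BG_def by (rule Mx_bound) (rule cl_bound)


lemma Uo_nonneg: "i \<in> J \<Longrightarrow> v \<in> V i \<Longrightarrow> Uo i v \<tau> \<ge> 0"
  using msys.U_nonneg[OF ms[of i], where r="r i" and v=v and \<tau>=\<tau>] msys.U_def[OF ms[of i], where r="r i"]
  by (simp add: Uo_def)

lemma Uo_T: "i \<in> J \<Longrightarrow> t \<in> T i \<Longrightarrow> Uo i t \<tau> \<ge> r i t - \<tau>"
  using msys.U_T[OF ms[of i], where r="r i" and t=t and \<tau>=\<tau>] msys.U_def[OF ms[of i], where r="r i"]
  by (simp add: Uo_def)

lemma Uo_step: "i \<in> J \<Longrightarrow> u \<in> V i \<Longrightarrow> u \<notin> T i \<Longrightarrow>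
  - pr i u + measure_pmf.expectation (P i u) (\<lambda>w. Uo i w (min \<kappa> (gr i w))) \<le> Uo i u \<kappa>"
  using msys.U_step[OF ms[of i], where r="r i" and u=u and \<kappa>=\<kappa>] msys.U_def[OF ms[of i], where r="r i"]
    msys.g_def[OF ms[of i], where r="r i"]
  by (simp add: Uo_def gr_def)

lemma Uo_grade: "i \<in> J \<Longrightarrow> v \<in> V i \<Longrightarrow> Uo i v (gr i v) \<le> 0"
  using msys.U_at_grade[OF ms[of i], where r="r i" and v=v] msys.U_def[OF ms[of i], where r="r i"]
    msys.g_def[OF ms[of i], where r="r i"]
  by (simp add: Uo_def gr_def)

lemma Yp_cons: "ys \<noteq> [] \<Longrightarrow> Yp i (u # ys) = min (gr i u) (Yp i ys)"
  unfolding Yp_def prevailing_cost_def gr_def by (simp add: Min_insert)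

lemma Yp_le: "v \<in> set xs \<Longrightarrow> Yp i xs \<le> gr i v"
  unfolding Yp_def prevailing_cost_def gr_def by (intro Min_le) auto

lemma Yp_in: assumes "i \<in> J" "xs \<noteq> []" "set xs \<subseteq> V i" shows "Lo \<le> Yp i xs" "Yp i xs \<le> Hi"
proof -
  have "Yp i xs \<in> gr i ` set xs" unfolding Yp_def prevailing_cost_def gr_def
    using assms by (intro Min_in) auto
  then obtain v where "v \<in> set xs" "Yp i xs = gr i v" by auto
  then show "Lo \<le> Yp i xs" "Yp i xs \<le> Hi" using Lo_le le_Hi assms by auto
qed

lemma G_shift:
  assumes "\<kappa> i \<le> gr i z" "ys \<noteq> []" "hd ys = w"
  shows "G \<kappa> (f(i := z # ys)) = G (\<kappa>(i := min (\<kappa> i) (gr i w))) (f(i := ys))"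
proof -
  have wy: "Yp i ys \<le> gr i w" using assms by (intro Yp_le) auto
  have "(\<lambda>j. cl (min (\<kappa> j) (Yp j ((f(i := z # ys)) j)))) =
        (\<lambda>j. cl (min ((\<kappa>(i := min (\<kappa> i) (gr i w))) j) (Yp j ((f(i := ys)) j))))"
  proof
    fix j show "cl (min (\<kappa> j) (Yp j ((f(i := z # ys)) j))) =
        cl (min ((\<kappa>(i := min (\<kappa> i) (gr i w))) j) (Yp j ((f(i := ys)) j)))"
    proof (cases "j = i")
      case True
      have "min (\<kappa> i) (min (gr i z) (Yp i ys)) = min (min (\<kappa> i) (gr i w)) (Yp i ys)"
        using assms(1) wy by (simp add: min_def)
      then show ?thesis using True assms by (simp add: Yp_cons)
    qed simp
  qed
  then show ?thesis by (simp add: G_def)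
qed

lemma G_abs: "\<bar>G \<kappa> \<sigma>\<bar> \<le> BG" by (rule G_bound)

lemma A_step:
  assumes i: "i \<in> J" and inv: "Inv u \<kappa>" and uT: "u i \<notin> T i"
  shows "A u \<kappa> = measure_pmf.expectation (P i (u i))
           (\<lambda>w. A (u(i := w)) (\<kappa>(i := min (\<kappa> i) (gr i w))))"
proof -
  define p where "p = (\<lambda>j. traj (P j) (T j) (u j))"
  define Q where "Q = Pi_pmf (J - {i}) [] p"
  have uV: "u i \<in> V i" and ku: "\<kappa> i \<le> gr i (u i)" using inv i by (auto simp: Inv_def)
  have bdQ: "\<bar>measure_pmf.expectation Q (\<lambda>f. G k (f(i := y)))\<bar> \<le> BG" for k y
    by (rule exp_abs_le) (rule G_abs)
  have "A u \<kappa> = measure_pmf.expectation (p i) (\<lambda>y. measure_pmf.expectation Q (\<lambda>f. G \<kappa> (f(i := y))))"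
    unfolding A_def p_def[symmetric] Q_def by (rule exp_Pi_split[OF finJ i G_abs])
  also have "p i = bind_pmf (P i (u i)) (\<lambda>w. map_pmf (Cons (u i)) (traj (P i) (T i) w))"
    unfolding p_def by (rule msys.traj_cons[OF ms[OF i] uV uT])
  also have "measure_pmf.expectation (bind_pmf (P i (u i)) (\<lambda>w. map_pmf (Cons (u i)) (traj (P i) (T i) w)))
               (\<lambda>y. measure_pmf.expectation Q (\<lambda>f. G \<kappa> (f(i := y)))) =
             measure_pmf.expectation (P i (u i)) (\<lambda>w. measure_pmf.expectation (traj (P i) (T i) w)
               (\<lambda>ys. measure_pmf.expectation Q (\<lambda>f. G \<kappa> (f(i := u i # ys)))))"
    by (subst exp_bind_bdd[OF bdQ]) simp
  also have "\<dots> = measure_pmf.expectation (P i (u i)) (\<lambda>w. A (u(i := w)) (\<kappa>(i := min (\<kappa> i) (gr i w))))"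
  proof (intro integral_cong_AE)
    show "AE w in measure_pmf (P i (u i)). measure_pmf.expectation (traj (P i) (T i) w)
               (\<lambda>ys. measure_pmf.expectation Q (\<lambda>f. G \<kappa> (f(i := u i # ys)))) =
           A (u(i := w)) (\<kappa>(i := min (\<kappa> i) (gr i w)))"
    proof (unfold AE_measure_pmf_iff, intro ballI)
      fix w assume w: "w \<in> set_pmf (P i (u i))"
      have wV: "w \<in> V i" using msys.closed[OF ms[OF i] uV] w by blast
      define \<kappa>' where "\<kappa>' = \<kappa>(i := min (\<kappa> i) (gr i w))"
      define p' where "p' = (\<lambda>j. traj (P j) (T j) ((u(i := w)) j))"
      have pi': "p' i = traj (P i) (T i) w" by (simp add: p'_def)
      have Q': "Pi_pmf (J - {i}) [] p' = Q" unfolding Q_def p'_def p_def by (intro Pi_pmf_cong) auto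
      have "A (u(i := w)) \<kappa>' = measure_pmf.expectation (p' i)
              (\<lambda>y. measure_pmf.expectation (Pi_pmf (J - {i}) [] p') (\<lambda>f. G \<kappa>' (f(i := y))))"
        unfolding A_def p'_def[symmetric] by (rule exp_Pi_split[OF finJ i G_abs])
      also have "\<dots> = measure_pmf.expectation (traj (P i) (T i) w)
              (\<lambda>ys. measure_pmf.expectation Q (\<lambda>f. G \<kappa> (f(i := u i # ys))))"
        unfolding Q' pi'
      proof (intro integral_cong_AE)
        show "AE ys in measure_pmf (traj (P i) (T i) w). measure_pmf.expectation Q (\<lambda>f. G \<kappa>' (f(i := ys))) =
               measure_pmf.expectation Q (\<lambda>f. G \<kappa> (f(i := u i # ys)))"
        proof (unfold AE_measure_pmf_iff, intro ballI)
          fix ys assume "ys \<in> set_pmf (traj (P i) (T i) w)"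
          then have "ys \<noteq> [] \<and> hd ys = w" using msys.set_traj[OF ms[OF i] wV] by simp
          then show "measure_pmf.expectation Q (\<lambda>f. G \<kappa>' (f(i := ys))) =
               measure_pmf.expectation Q (\<lambda>f. G \<kappa> (f(i := u i # ys)))"
            using G_shift[where \<kappa>=\<kappa> and i=i and z="u i", OF ku] by (simp add: \<kappa>'_def)
        qed
      qed auto
      finally show "measure_pmf.expectation (traj (P i) (T i) w)
               (\<lambda>ys. measure_pmf.expectation Q (\<lambda>f. G \<kappa> (f(i := u i # ys)))) =
           A (u(i := w)) (\<kappa>(i := min (\<kappa> i) (gr i w)))" by (simp add: \<kappa>'_def)
    qed
  qed auto
  finally show ?thesis .
qed

end


context mpoi_ctx begin

lemma set_Pi: "\<sigma> \<in> set_pmf (Pi_pmf J [] p) \<Longrightarrow> j \<in> J \<Longrightarrow> \<sigma> j \<in> set_pmf (p j)"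
  using set_Pi_pmf[OF finJ, of "[]" p] by (auto simp: PiE_dflt_def)

lemma select_step:
  assumes inv: "Inv u \<kappa>" and I: "I \<in> F" and uT: "\<forall>i\<in>I. u i \<in> T i"
  shows "(\<Sum>i\<in>I. r i (u i)) + hf I \<le> W u \<kappa>"
proof -
  have IJ: "I \<subseteq> J" using I FJ by auto
  have finI: "finite I" using IJ finJ finite_subset by blast
  define M where "M = Pi_pmf J [] (\<lambda>j. traj (P j) (T j) (u j))"
  define L where "L \<sigma> = (\<Sum>i\<in>I. cl (min (\<kappa> i) (Yp i (\<sigma> i)))) + hf I" for \<sigma>
  have Lb: "\<bar>L \<sigma>\<bar> \<le> (\<Sum>i\<in>I. \<bar>Lo\<bar> + \<bar>Hi\<bar>) + \<bar>hf I\<bar>" for \<sigma>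
  proof -
    have "\<bar>L \<sigma>\<bar> \<le> \<bar>\<Sum>i\<in>I. cl (min (\<kappa> i) (Yp i (\<sigma> i)))\<bar> + \<bar>hf I\<bar>" unfolding L_def by (rule abs_triangle_ineq)
    also have "\<bar>\<Sum>i\<in>I. cl (min (\<kappa> i) (Yp i (\<sigma> i)))\<bar> \<le> (\<Sum>i\<in>I. \<bar>cl (min (\<kappa> i) (Yp i (\<sigma> i)))\<bar>)" by (rule sum_abs)
    also have "\<dots> \<le> (\<Sum>i\<in>I. \<bar>Lo\<bar> + \<bar>Hi\<bar>)" by (intro sum_mono cl_bound)
    finally show ?thesis by simp
  qed
  have "measure_pmf.expectation M L \<le> A u \<kappa>"
    unfolding A_def M_def[symmetric]
    by (intro integral_mono int_bdd[OF Lb] int_bdd[OF G_abs]) (auto simp: L_def G_def intro: Mx_ge[OF I])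
  moreover have "measure_pmf.expectation M L = measure_pmf.expectation M (\<lambda>_. (\<Sum>i\<in>I. \<kappa> i) + hf I)"
  proof (intro integral_cong_AE)
    show "AE \<sigma> in measure_pmf M. L \<sigma> = (\<Sum>i\<in>I. \<kappa> i) + hf I"
    proof (unfold AE_measure_pmf_iff, intro ballI)
      fix \<sigma> assume \<sigma>: "\<sigma> \<in> set_pmf M"
      have "cl (min (\<kappa> i) (Yp i (\<sigma> i))) = \<kappa> i" if i: "i \<in> I" for i
      proof -
        have iJ: "i \<in> J" using i IJ by auto
        have "\<sigma> i \<in> set_pmf (traj (P i) (T i) (u i))" using set_Pi[OF \<sigma>[unfolded M_def] iJ] by simp
        then have "\<sigma> i = [u i]" using msys.traj_T[OF ms[OF iJ]] uT i by simp
        then have "Yp i (\<sigma> i) = gr i (u i)" by (simp add: Yp_def prevailing_cost_def gr_def)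
        moreover have "u i \<in> V i" "Lo \<le> \<kappa> i" "\<kappa> i \<le> gr i (u i)" using inv iJ by (auto simp: Inv_def)
        moreover have "gr i (u i) \<le> Hi" using le_Hi iJ \<open>u i \<in> V i\<close> by blast
        ultimately show ?thesis by (simp add: cl_id min_def)
      qed
      then show "L \<sigma> = (\<Sum>i\<in>I. \<kappa> i) + hf I" unfolding L_def by simp
    qed
  qed auto
  ultimately have EA: "(\<Sum>i\<in>I. \<kappa> i) + hf I \<le> A u \<kappa>" by simp
  have "(\<Sum>i\<in>I. r i (u i) - \<kappa> i) \<le> (\<Sum>i\<in>I. Uo i (u i) (\<kappa> i))"
    using IJ uT by (intro sum_mono Uo_T) auto
  also have "\<dots> \<le> (\<Sum>j\<in>J. Uo j (u j) (\<kappa> j))"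
    using IJ finJ inv by (intro sum_mono2 Uo_nonneg) (auto simp: Inv_def)
  finally have "(\<Sum>i\<in>I. r i (u i)) - (\<Sum>i\<in>I. \<kappa> i) \<le> (\<Sum>j\<in>J. Uo j (u j) (\<kappa> j))"
    by (simp add: sum_subtractf)
  then show ?thesis using EA by (simp add: W_def)
qed

lemma main:
  "mpoi_valid J F P T \<sigma> n h \<Longrightarrow> h \<noteq> [] \<Longrightarrow> Inv (last h) \<kappa> \<Longrightarrow>
   mpoi_util hf P pr r \<sigma> n h \<le> W (last h) \<kappa>"
proof (induction n arbitrary: h \<kappa>)
  case 0
  then show ?case using select_step by (auto split: action.splits)
next
  case (Suc n)
  show ?case
  proof (cases "\<sigma> h")
    case (Select I)
    then show ?thesis using Suc.prems select_step by auto
  next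
    case (Advance i)
    define u where "u = last h"
    have i: "i \<in> J" and uT: "u i \<notin> T i"
      and val: "\<forall>w\<in>set_pmf (P i (u i)). mpoi_valid J F P T \<sigma> n (h @ [u(i := w)])"
      using Suc.prems Advance by (auto simp: u_def)
    have inv: "Inv u \<kappa>" using Suc.prems by (simp add: u_def)
    have uV: "u i \<in> V i" using inv i by (auto simp: Inv_def)
    have fin: "finite (set_pmf (P i (u i)))" using msys.fin_supp[OF ms[OF i] uV] .
    define \<kappa>w where "\<kappa>w w = \<kappa>(i := min (\<kappa> i) (gr i w))" for w
    define R where "R = (\<Sum>j\<in>J - {i}. Uo j (u j) (\<kappa> j))"
    have W_eq: "W (u(i := w)) (\<kappa>w w) = A (u(i := w)) (\<kappa>w w) + (R + Uo i w (min (\<kappa> i) (gr i w)))" for w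
    proof -
      have "(\<Sum>j\<in>J. Uo j ((u(i := w)) j) (\<kappa>w w j)) = Uo i w (min (\<kappa> i) (gr i w)) + (\<Sum>j\<in>J - {i}. Uo j ((u(i := w)) j) (\<kappa>w w j))"
        using finJ i by (subst sum.remove) (auto simp: \<kappa>w_def)
      also have "(\<Sum>j\<in>J - {i}. Uo j ((u(i := w)) j) (\<kappa>w w j)) = R"
        unfolding R_def \<kappa>w_def by (intro sum.cong) auto
      finally show ?thesis by (simp add: W_def)
    qed
    have "mpoi_util hf P pr r \<sigma> (Suc n) h = - pr i (u i) + measure_pmf.expectation (P i (u i))
            (\<lambda>w. mpoi_util hf P pr r \<sigma> n (h @ [u(i := w)]))"
      using Advance by (simp add: u_def)
    also have "\<dots> \<le> - pr i (u i) + measure_pmf.expectation (P i (u i)) (\<lambda>w. W (u(i := w)) (\<kappa>w w))"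
    proof -
      have "mpoi_util hf P pr r \<sigma> n (h @ [u(i := w)]) \<le> W (u(i := w)) (\<kappa>w w)"
        if w: "w \<in> set_pmf (P i (u i))" for w
      proof -
        have wV: "w \<in> V i" using msys.closed[OF ms[OF i] uV] w by blast
        have invw: "Inv (u(i := w)) (\<kappa>w w)"
          using inv wV Lo_le[OF i wV] by (auto simp: Inv_def \<kappa>w_def)
        have vw: "mpoi_valid J F P T \<sigma> n (h @ [u(i := w)])" using val w by blast
        have "mpoi_util hf P pr r \<sigma> n (h @ [u(i := w)]) \<le> W (last (h @ [u(i := w)])) (\<kappa>w w)"
          by (rule Suc.IH[OF vw]) (simp, simp only: last_snoc invw)
        then show ?thesis by (simp only: last_snoc)
      qed
      then show ?thesis using fin by (simp add: exp_mono_fin)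
    qed
    also have "measure_pmf.expectation (P i (u i)) (\<lambda>w. W (u(i := w)) (\<kappa>w w)) =
          measure_pmf.expectation (P i (u i)) (\<lambda>w. A (u(i := w)) (\<kappa>w w)) + R +
          measure_pmf.expectation (P i (u i)) (\<lambda>w. Uo i w (min (\<kappa> i) (gr i w)))"
      unfolding W_eq using fin by (simp add: exp_add_fin)
    also have "measure_pmf.expectation (P i (u i)) (\<lambda>w. A (u(i := w)) (\<kappa>w w)) = A u \<kappa>"
      using A_step[OF i inv uT] by (simp add: \<kappa>w_def)
    finally have "mpoi_util hf P pr r \<sigma> (Suc n) h \<le> A u \<kappa> + R +
        (- pr i (u i) + measure_pmf.expectation (P i (u i)) (\<lambda>w. Uo i w (min (\<kappa> i) (gr i w))))" by simp
    also have "\<dots> \<le> A u \<kappa> + R + Uo i (u i) (\<kappa> i)" using Uo_step[OF i uV uT] by simp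
    also have "\<dots> = W u \<kappa>"
      using finJ i by (simp add: W_def R_def sum.remove)
    finally show ?thesis by (simp add: u_def)
  qed
qed

end


context mpoi_ctx begin

lemma final:
  "mpoi_opt J F hf P s T pr r \<le>
    measure_pmf.expectation (Pi_pmf J [] (\<lambda>i. traj (P i) (T i) (s i)))
      (\<lambda>\<sigma>. Max ((\<lambda>I. (\<Sum>i\<in>I. prevailing_cost (P i) (T i) (pr i) (r i) (\<sigma> i)) + hf I) ` F))"
proof -
  define \<kappa>0 where "\<kappa>0 j = gr j (s j)" for j
  define M where "M = Pi_pmf J [] (\<lambda>i. traj (P i) (T i) (s i))"
  have inv0: "Inv s \<kappa>0" using sV Lo_le sV by (auto simp: Inv_def \<kappa>0_def)
  have "A s \<kappa>0 = measure_pmf.expectation M (\<lambda>\<sigma>. Mx (\<lambda>j. Yp j (\<sigma> j)))"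
    unfolding A_def M_def[symmetric]
  proof (intro integral_cong_AE)
    show "AE \<sigma> in measure_pmf M. G \<kappa>0 \<sigma> = Mx (\<lambda>j. Yp j (\<sigma> j))"
    proof (unfold AE_measure_pmf_iff, intro ballI)
      fix \<sigma> assume \<sigma>: "\<sigma> \<in> set_pmf M"
      show "G \<kappa>0 \<sigma> = Mx (\<lambda>j. Yp j (\<sigma> j))" unfolding G_def
      proof (rule Mx_cong)
        fix j assume j: "j \<in> J"
        have sj: "\<sigma> j \<in> set_pmf (traj (P j) (T j) (s j))" using set_Pi[OF \<sigma>[unfolded M_def] j] by simp
        have ne: "\<sigma> j \<noteq> []" "hd (\<sigma> j) = s j" using msys.set_traj[OF ms[OF j] sV[OF j] sj] by auto
        have sub: "set (\<sigma> j) \<subseteq> V j" using msys.set_traj_V[OF ms[OF j] sV[OF j] sj] .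
        have "Yp j (\<sigma> j) \<le> gr j (s j)" using ne by (intro Yp_le) (metis hd_in_set)
        moreover have "Lo \<le> Yp j (\<sigma> j)" "Yp j (\<sigma> j) \<le> Hi" using Yp_in[OF j ne(1) sub] by auto
        ultimately show "cl (min (\<kappa>0 j) (Yp j (\<sigma> j))) = Yp j (\<sigma> j)"
          by (simp add: \<kappa>0_def cl_id min_def)
      qed
    qed
  qed auto
  also have "\<dots> = measure_pmf.expectation M
      (\<lambda>\<sigma>. Max ((\<lambda>I. (\<Sum>i\<in>I. prevailing_cost (P i) (T i) (pr i) (r i) (\<sigma> i)) + hf I) ` F))"
    by (simp add: Mx_def Yp_def)
  finally have AE: "A s \<kappa>0 = measure_pmf.expectation M
      (\<lambda>\<sigma>. Max ((\<lambda>I. (\<Sum>i\<in>I. prevailing_cost (P i) (T i) (pr i) (r i) (\<sigma> i)) + hf I) ` F))" .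
  have Wle: "W s \<kappa>0 \<le> A s \<kappa>0"
  proof -
    have "(\<Sum>j\<in>J. Uo j (s j) (\<kappa>0 j)) \<le> 0"
      using Uo_grade sV by (intro sum_nonpos) (auto simp: \<kappa>0_def)
    then show ?thesis by (simp add: W_def)
  qed
  show ?thesis unfolding mpoi_opt_def M_def[symmetric] AE[symmetric]
  proof (rule cSup_least)
    show "{mpoi_util hf P pr r \<sigma> n [s] |\<sigma> n. mpoi_valid J F P T \<sigma> n [s]} \<noteq> {}"
      using empty_F by (intro notI) (auto dest!: spec[of _ "\<lambda>_. Select {}"] spec[of _ 0] simp: ex_in_conv[symmetric])
  next
    fix x assume "x \<in> {mpoi_util hf P pr r \<sigma> n [s] |\<sigma> n. mpoi_valid J F P T \<sigma> n [s]}"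
    then obtain \<sigma> n where x: "x = mpoi_util hf P pr r \<sigma> n [s]" and v: "mpoi_valid J F P T \<sigma> n [s]" by auto
    have "x \<le> W (last [s]) \<kappa>0" unfolding x by (rule main[OF v]) (use inv0 in auto)
    then show "x \<le> A s \<kappa>0" using Wle by simp
  qed
qed

end

theorem lemma1:
  fixes J :: "'j set" and F :: "'j set set" and hf :: "'j set \<Rightarrow> real"
    and V :: "'j \<Rightarrow> 's set" and P :: "'j \<Rightarrow> 's \<Rightarrow> 's pmf" and s :: "'j \<Rightarrow> 's"
    and T :: "'j \<Rightarrow> 's set" and pr :: "'j \<Rightarrow> 's \<Rightarrow> real" and r :: "'j \<Rightarrow> 's \<Rightarrow> real"
  assumes "finite J"
    and "F \<subseteq> Pow J" and "F \<noteq> {}"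
    and "\<forall>A\<in>F. \<forall>B. B \<subseteq> A \<longrightarrow> B \<in> F"
    and "\<forall>i\<in>J. markov_system (V i) (P i) (s i) (T i) (pr i) (r i)"
    and "\<forall>i\<in>J. \<forall>t\<in>T i. r i t \<ge> 0"
  shows "mpoi_opt J F hf P s T pr r \<le>
    measure_pmf.expectation (Pi_pmf J [] (\<lambda>i. traj (P i) (T i) (s i)))
      (\<lambda>\<sigma>. Max ((\<lambda>I. (\<Sum>i\<in>I. prevailing_cost (P i) (T i) (pr i) (r i) (\<sigma> i)) + hf I) ` F))"
proof -
  interpret mpoi_ctx J F hf V P s T pr r using assms by unfold_locales
  show ?thesis by (rule final)
qed


end
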